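(* In a scarce-reserves equilibrium, the aggregate real balance of reserves is strictly decreasing in the nominal interest rate: $\partial r/\partial i<0$, where $$r=\begin{cases}\dfrac{(\sigma_2+\sigma_3)\chi}{1+i_d\chi}L^{-1}(i_\ell)-\dfrac{\sigma_3\bar\delta\chi}{1+i_d\chi} & \text{if } L^{-1}(i_\ell)>\bar\delta,\\[2mm] \dfrac{\sigma_2\chi}{1+i_d\chi}L^{-1}(i_\ell) & \text{if } L^{-1}(i_\ell)\le\bar\delta.\end{cases}$$
   Context: Buyers meet sellers in one of three meeting types with probabilities $\sigma_1,\sigma_2,\sigma_3>0$ ($\sum\sigma_j=1$); type-3 buyers may use unsecured credit up to a limit $\bar\delta\ge0$. DM preferences $u,c$ with $u'>0,u''<0$, $c'>0,c''\ge0$, $u(0)=c(0)=0$, $q^*$ solving $u'(q^* )=c'(q^* )$; bargaining power $\theta\in(0,1]$, payment $v(q)=(1-\theta)u(q)+\theta c(q)$, liquidity premium $\lambda(q)=\theta[u'(q)-c'(q)]/[(1-\theta)u'(q)+\theta c'(q)]$ (strictly decreasing on $[0,q^* )$, $0$ at $q^*$), and $L(z)=\lambda(\min\{q^*,v^{-1}(z)\})$ with strictly decreasing inverse $L^{-1}$. Policy: nominal rate $i\ge0$, interest on reserves $i_r$, reserve requirement $\chi\in(0,1)$, $a=(1-\chi)/\chi$. Bank cost functions $\gamma,\eta$ twice differentiable, $\gamma',\gamma'',\eta',\eta''>0$ on $(0,\infty)$, $\gamma(0)=\gamma'(0)=\eta(0)=\eta'(0)=0$; entry cost $k>0$. Loan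 rate $i_\ell=(1+i)/(1+i_d)-1$. In a scarce-reserves equilibrium, bank-level reserves $\tilde r$ and deposit rate $i_d>0$ solve $\gamma'(\tilde r)\tilde r-\gamma(\tilde r)+\eta'(a\tilde r)a\tilde r-\eta(a\tilde r)=k$ and $i_d=i_r-\gamma'(\tilde r)+\big[\frac{1+i}{1+i_d}-1-\eta'(a\tilde r)\big]a$, each bank lends $a\tilde r$, and aggregate reserves $r$ are given by the displayed formula. *)

theory Defs
  imports "HOL-Analysis.Analysis"
begin

definition pay :: "real \<Rightarrow> (real \<Rightarrow> real) \<Rightarrow> (real \<Rightarrow> real) \<Rightarrow> real \<Rightarrow> real" where
  "pay \<theta> u c q = (1 - \<theta>) * u q + \<theta> * c q"

definition liqprem :: "real \<Rightarrow> (real \<Rightarrow> real) \<Rightarrow> (real \<Rightarrow> real) \<Rightarrow> real \<Rightarrow> real" where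
  "liqprem \<theta> u' c' q = \<theta> * (u' q - c' q) / ((1 - \<theta>) * u' q + \<theta> * c' q)"

text \<open>L(z) = lambda(min(q*, v^{-1}(z))). Since v is strictly increasing with v(0)=0,
  min(q*, v^{-1}(z)) is q* when z >= v(q*), and otherwise the unique q in [0,q*] with v(q)=z.\<close>
definition Lfun :: "real \<Rightarrow> (real \<Rightarrow> real) \<Rightarrow> (real \<Rightarrow> real) \<Rightarrow> (real \<Rightarrow> real) \<Rightarrow> (real \<Rightarrow> real)
                    \<Rightarrow> real \<Rightarrow> real \<Rightarrow> real" where
  "Lfun \<theta> u c u' c' qstar z =
     liqprem \<theta> u' c'
       (if pay \<theta> u c qstar \<le> z then qstar
        else (THE q. 0 \<le> q \<and> q \<le> qstar \<and> pay \<theta> u c q = z))"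

definition loan_rate :: "real \<Rightarrow> real \<Rightarrow> real" where
  "loan_rate i idr = (1 + i) / (1 + idr) - 1"

text \<open>Scarce-reserves equilibrium conditions: bank-level reserves rt and deposit rate idr > 0
  solve the free-entry condition and the deposit-rate condition, with a = (1-chi)/chi.\<close>
definition scarce_eq ::
  "(real \<Rightarrow> real) \<Rightarrow> (real \<Rightarrow> real) \<Rightarrow> (real \<Rightarrow> real) \<Rightarrow> (real \<Rightarrow> real)
   \<Rightarrow> real \<Rightarrow> real \<Rightarrow> real \<Rightarrow> real \<Rightarrow> real \<Rightarrow> real \<Rightarrow> bool" where
  "scarce_eq \<gamma> \<gamma>' \<eta> \<eta>' k chi ir i idr rt \<longleftrightarrow>
     (let a = (1 - chi) / chi in
        0 \<le> rt \<and> 0 < idr \<and>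
        \<gamma>' rt * rt - \<gamma> rt + \<eta>' (a * rt) * (a * rt) - \<eta> (a * rt) = k \<and>
        idr = ir - \<gamma>' rt + ((1 + i) / (1 + idr) - 1 - \<eta>' (a * rt)) * a)"

text \<open>Aggregate real reserves as a function of the deposit rate and x = L^{-1}(i_l).\<close>
definition agg_reserves :: "real \<Rightarrow> real \<Rightarrow> real \<Rightarrow> real \<Rightarrow> real \<Rightarrow> real \<Rightarrow> real" where
  "agg_reserves \<sigma>2 \<sigma>3 \<delta> chi idr x =
     (if x > \<delta> then (\<sigma>2 + \<sigma>3) * chi / (1 + idr * chi) * x - \<sigma>3 * \<delta> * chi / (1 + idr * chi)
      else \<sigma>2 * chi / (1 + idr * chi) * x)"

end

theory Submission
  imports Defs
begin

lemma at0: "(x::real) > 0 \<Longrightarrow> (f has_real_derivative D) (at x within {0..}) \<Longrightarrow> (f has_real_derivative D) (at x)"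
  by (metis at_within_open greaterThan_iff has_field_derivative_subset open_greaterThan atLeast_iff less_imp_le subsetI)
lemma cont0: "(\<And>x. x \<ge> 0 \<Longrightarrow> (f has_real_derivative f' x) (at x within {0..})) \<Longrightarrow> continuous_on {0..} f"
  by (metis atLeast_iff continuous_on_eq_continuous_within DERIV_continuous)

lemma Fmono:
  fixes \<gamma> \<gamma>' \<gamma>'' \<eta> \<eta>' \<eta>'' :: "real \<Rightarrow> real" and a :: real
  assumes a: "a > 0"
    and gamma_deriv: "\<And>x. x \<ge> 0 \<Longrightarrow> (\<gamma> has_real_derivative \<gamma>' x) (at x within {0..})"
    and gamma'_deriv: "\<And>x. x \<ge> 0 \<Longrightarrow> (\<gamma>' has_real_derivative \<gamma>'' x) (at x within {0..})"
    and eta_deriv: "\<And>x. x \<ge> 0 \<Longrightarrow> (\<eta> has_real_derivative \<eta>' x) (at x within {0..})"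
    and eta'_deriv: "\<And>x. x \<ge> 0 \<Longrightarrow> (\<eta>' has_real_derivative \<eta>'' x) (at x within {0..})"
    and gp: "\<And>x. x > 0 \<Longrightarrow> \<gamma>'' x > 0"
    and ep: "\<And>x. x > 0 \<Longrightarrow> \<eta>'' x > 0"
    and r: "0 \<le> r1" "r1 < r2"
  shows "\<gamma>' r1 * r1 - \<gamma> r1 + \<eta>' (a*r1) * (a*r1) - \<eta> (a*r1)
       < \<gamma>' r2 * r2 - \<gamma> r2 + \<eta>' (a*r2) * (a*r2) - \<eta> (a*r2)"
proof -
  define F where "F r = \<gamma>' r * r - \<gamma> r + \<eta>' (a*r) * (a*r) - \<eta> (a*r)" for r
  have cg: "continuous_on {0..} \<gamma>" using cont0[OF gamma_deriv] by blast
  have cg': "continuous_on {0..} \<gamma>'" using cont0[OF gamma'_deriv] by blast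
  have ce: "continuous_on {0..} \<eta>" using cont0[OF eta_deriv] by blast
  have ce': "continuous_on {0..} \<eta>'" using cont0[OF eta'_deriv] by blast
  have sub: "{r1..r2} \<subseteq> {0..}" using r by auto
  have am: "(\<lambda>r. a*r) ` {r1..r2} \<subseteq> {0..}" using r a by auto
  have ce1: "continuous_on {r1..r2} (\<lambda>r. \<eta> (a*r))"
    by (rule continuous_on_compose2[OF ce _ am]) (intro continuous_intros)
  have ce1': "continuous_on {r1..r2} (\<lambda>r. \<eta>' (a*r))"
    by (rule continuous_on_compose2[OF ce' _ am]) (intro continuous_intros)
  have cont: "continuous_on {r1..r2} F"
    unfolding F_def using continuous_on_subset[OF cg sub] continuous_on_subset[OF cg' sub] ce1 ce1'
    by (intro continuous_intros) auto
  have "F r1 < F r2"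
  proof (rule DERIV_pos_imp_increasing_open[OF r(2) _ cont])
    fix x assume x: "r1 < x" "x < r2"
    hence x0: "x > 0" using r by auto
    hence ax: "a*x > 0" using a by simp
    have d1: "(\<gamma> has_real_derivative \<gamma>' x) (at x)" using at0[OF x0 gamma_deriv] x0 by simp
    have d2: "(\<gamma>' has_real_derivative \<gamma>'' x) (at x)" using at0[OF x0 gamma'_deriv] x0 by simp
    have d3: "(\<eta> has_real_derivative \<eta>' (a*x)) (at (a*x))" using at0[OF ax eta_deriv] ax by simp
    have d4: "(\<eta>' has_real_derivative \<eta>'' (a*x)) (at (a*x))" using at0[OF ax eta'_deriv] ax by simp
    have d5: "((\<lambda>r. \<eta> (a*r)) has_real_derivative \<eta>' (a*x) * a) (at x)"
      using DERIV_chain2[OF d3 DERIV_cmult_Id[of a x]] by simp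
    have d6: "((\<lambda>r. \<eta>' (a*r)) has_real_derivative \<eta>'' (a*x) * a) (at x)"
      using DERIV_chain2[OF d4 DERIV_cmult_Id[of a x]] by simp
    have m1: "((\<lambda>z. \<gamma>' z * z) has_real_derivative \<gamma>'' x * x + 1 * \<gamma>' x) (at x)"
      by (rule DERIV_mult[OF d2 DERIV_ident])
    have m2: "((\<lambda>z. \<eta>' (a * z) * (a * z)) has_real_derivative \<eta>'' (a * x) * a * (a * x) + a * \<eta>' (a * x)) (at x)"
      by (rule DERIV_mult[OF d6 DERIV_cmult_Id])
    have "(F has_real_derivative
       ((\<gamma>'' x * x + 1 * \<gamma>' x) - \<gamma>' x + (\<eta>'' (a * x) * a * (a * x) + a * \<eta>' (a * x)) - \<eta>' (a*x) * a)) (at x)"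
      unfolding F_def
      by (intro derivative_intros d1 d5 m1 m2)
    moreover have "((\<gamma>'' x * x + 1 * \<gamma>' x) - \<gamma>' x + (\<eta>'' (a * x) * a * (a * x) + a * \<eta>' (a * x)) - \<eta>' (a*x) * a) > 0"
      using gp[OF x0] ep[OF ax] x0 a by (simp add: algebra_simps add_pos_pos)
    ultimately show "\<exists>y. (F has_real_derivative y) (at x) \<and> 0 < y" by blast
  qed
  thus ?thesis unfolding F_def .
qed
theorem mainTheorem9:
  fixes \<sigma>1 \<sigma>2 \<sigma>3 \<delta> \<theta> qstar ir chi k :: real
    and u c u' c' u'' c'' \<gamma> \<gamma>' \<gamma>'' \<eta> \<eta>' \<eta>'' Linv :: "real \<Rightarrow> real"
  assumes sig: "\<sigma>1 > 0" "\<sigma>2 > 0" "\<sigma>3 > 0" "\<sigma>1 + \<sigma>2 + \<sigma>3 = 1"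
    and delta: "\<delta> \<ge> 0"
    and theta: "0 < \<theta>" "\<theta> \<le> 1"
    and u_deriv: "\<And>q. q \<ge> 0 \<Longrightarrow> (u has_real_derivative u' q) (at q within {0..})"
    and u'_deriv: "\<And>q. q \<ge> 0 \<Longrightarrow> (u' has_real_derivative u'' q) (at q within {0..})"
    and c_deriv: "\<And>q. q \<ge> 0 \<Longrightarrow> (c has_real_derivative c' q) (at q within {0..})"
    and c'_deriv: "\<And>q. q \<ge> 0 \<Longrightarrow> (c' has_real_derivative c'' q) (at q within {0..})"
    and u_pos: "\<And>q. q \<ge> 0 \<Longrightarrow> u' q > 0" "\<And>q. q \<ge> 0 \<Longrightarrow> u'' q < 0"
    and c_pos: "\<And>q. q \<ge> 0 \<Longrightarrow> c' q > 0" "\<And>q. q \<ge> 0 \<Longrightarrow> c'' q \<ge> 0"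
    and uc0: "u 0 = 0" "c 0 = 0"
    and qstar: "qstar > 0" "u' qstar = c' qstar"
    and lam_dec: "strict_antimono_on {0..qstar} (liqprem \<theta> u' c')"
    and Linv: "\<And>y. y \<in> Lfun \<theta> u c u' c' qstar ` {0..} \<Longrightarrow>
                 Linv y \<ge> 0 \<and> Lfun \<theta> u c u' c' qstar (Linv y) = y"
    and Linv_dec: "strict_antimono_on (Lfun \<theta> u c u' c' qstar ` {0..}) Linv"
    and chi: "0 < chi" "chi < 1"
    and gamma_deriv: "\<And>x. x \<ge> 0 \<Longrightarrow> (\<gamma> has_real_derivative \<gamma>' x) (at x within {0..})"
    and gamma'_deriv: "\<And>x. x \<ge> 0 \<Longrightarrow> (\<gamma>' has_real_derivative \<gamma>'' x) (at x within {0..})"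
    and eta_deriv: "\<And>x. x \<ge> 0 \<Longrightarrow> (\<eta> has_real_derivative \<eta>' x) (at x within {0..})"
    and eta'_deriv: "\<And>x. x \<ge> 0 \<Longrightarrow> (\<eta>' has_real_derivative \<eta>'' x) (at x within {0..})"
    and gamma_pos: "\<And>x. x > 0 \<Longrightarrow> \<gamma>' x > 0" "\<And>x. x > 0 \<Longrightarrow> \<gamma>'' x > 0"
    and eta_pos: "\<And>x. x > 0 \<Longrightarrow> \<eta>' x > 0" "\<And>x. x > 0 \<Longrightarrow> \<eta>'' x > 0"
    and gamma0: "\<gamma> 0 = 0" "\<gamma>' 0 = 0"
    and eta0: "\<eta> 0 = 0" "\<eta>' 0 = 0"
    and k: "k > 0"
    and rates: "0 \<le> i1" "i1 < i2"
    and eq1: "scarce_eq \<gamma> \<gamma>' \<eta> \<eta>' k chi ir i1 id1 rt1"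
    and eq2: "scarce_eq \<gamma> \<gamma>' \<eta> \<eta>' k chi ir i2 id2 rt2"
    and dom1: "loan_rate i1 id1 \<in> Lfun \<theta> u c u' c' qstar ` {0..}"
    and dom2: "loan_rate i2 id2 \<in> Lfun \<theta> u c u' c' qstar ` {0..}"
  shows "agg_reserves \<sigma>2 \<sigma>3 \<delta> chi id2 (Linv (loan_rate i2 id2))
       < agg_reserves \<sigma>2 \<sigma>3 \<delta> chi id1 (Linv (loan_rate i1 id1))"
  proof -
  define a where "a = (1 - chi) / chi"
  have a: "a > 0" using chi by (simp add: a_def)
  from eq1 have e1: "0 \<le> rt1" "0 < id1"
     "\<gamma>' rt1 * rt1 - \<gamma> rt1 + \<eta>' (a * rt1) * (a * rt1) - \<eta> (a * rt1) = k"
     "id1 = ir - \<gamma>' rt1 + ((1 + i1) / (1 + id1) - 1 - \<eta>' (a * rt1)) * a"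
    unfolding scarce_eq_def a_def Let_def by auto
  from eq2 have e2: "0 \<le> rt2" "0 < id2"
     "\<gamma>' rt2 * rt2 - \<gamma> rt2 + \<eta>' (a * rt2) * (a * rt2) - \<eta> (a * rt2) = k"
     "id2 = ir - \<gamma>' rt2 + ((1 + i2) / (1 + id2) - 1 - \<eta>' (a * rt2)) * a"
    unfolding scarce_eq_def a_def Let_def by auto
  have rteq: "rt1 = rt2"
  proof (rule ccontr)
    assume "rt1 \<noteq> rt2"
    then consider "rt1 < rt2" | "rt2 < rt1" by linarith
    thus False
    proof cases
      case 1 show False using Fmono[OF a gamma_deriv gamma'_deriv eta_deriv eta'_deriv gamma_pos(2) eta_pos(2) e1(1) 1] e1(3) e2(3) by simp
    next
      case 2 show False using Fmono[OF a gamma_deriv gamma'_deriv eta_deriv eta'_deriv gamma_pos(2) eta_pos(2) e2(1) 2] e1(3) e2(3) by simp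
    qed
  qed
  define C where "C = ir - \<gamma>' rt1 - a - \<eta>' (a * rt1) * a"
  have q1: "id1 = C + a * ((1 + i1) / (1 + id1))" using e1(4) unfolding C_def by (simp add: algebra_simps)
  have q2: "id2 = C + a * ((1 + i2) / (1 + id2))" using e2(4) rteq unfolding C_def by (simp add: algebra_simps)
  have dlt: "id1 < id2"
  proof (rule ccontr)
    assume "\<not> id1 < id2"
    hence le: "id2 \<le> id1" by simp
    have "(1 + i2) / (1 + id2) \<ge> (1 + i2) / (1 + id1)"
      using le e2(2) rates by (intro divide_left_mono) auto
    moreover have "(1 + i2) / (1 + id1) > (1 + i1) / (1 + id1)"
      using rates e1(2) by (intro divide_strict_right_mono) auto
    ultimately have "a * ((1 + i2) / (1 + id2)) > a * ((1 + i1) / (1 + id1))"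
      using a by (meson less_le_trans mult_strict_left_mono)
    thus False using q1 q2 le by linarith
  qed
  have l1: "loan_rate i1 id1 = (id1 - C) / a - 1" using q1 a unfolding loan_rate_def by (simp add: field_simps)
  have l2: "loan_rate i2 id2 = (id2 - C) / a - 1" using q2 a unfolding loan_rate_def by (simp add: field_simps)
  have llt: "loan_rate i1 id1 < loan_rate i2 id2" unfolding l1 l2 using dlt a
    by (simp add: divide_strict_right_mono)
  define x1 where "x1 = Linv (loan_rate i1 id1)"
  define x2 where "x2 = Linv (loan_rate i2 id2)"
  have x1: "x1 \<ge> 0" using Linv[OF dom1] x1_def by simp
  have x2: "x2 \<ge> 0" using Linv[OF dom2] x2_def by simp
  have xlt: "x2 < x1" using Linv_dec dom1 dom2 llt unfolding x1_def x2_def monotone_on_def by auto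
  define h where "h x = (if x > \<delta> then (\<sigma>2 + \<sigma>3) * x - \<sigma>3 * \<delta> else \<sigma>2 * x)" for x
  have agg: "agg_reserves \<sigma>2 \<sigma>3 \<delta> chi d x = chi / (1 + d * chi) * h x" for d x
    unfolding agg_reserves_def h_def by (simp add: right_diff_distrib diff_divide_distrib mult.commute mult.left_commute)
  have h0: "h x2 \<ge> 0"
  proof (cases "x2 > \<delta>")
    case True
    have "\<sigma>3 * \<delta> \<le> \<sigma>3 * x2" using True sig by (intro mult_left_mono) auto
    moreover have "0 \<le> \<sigma>2 * x2" using sig x2 by simp
    ultimately show ?thesis using True unfolding h_def by (simp add: algebra_simps)
  next
    case False thus ?thesis using sig x2 unfolding h_def by simp
  qed
  have hlt: "h x2 < h x1"
  proof -
    have A: "\<sigma>2 * x2 < \<sigma>2 * x1" "\<sigma>3 * x2 < \<sigma>3 * x1" using sig xlt by simp_all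
    have B: "\<sigma>3 * \<delta> \<le> \<sigma>3 * x1" if "\<delta> < x1" using that sig by (intro mult_left_mono) auto
    have C: "\<sigma>3 * x2 \<le> \<sigma>3 * \<delta>" if "\<not> \<delta> < x2" using that sig by (intro mult_left_mono) auto
    show ?thesis unfolding h_def using A B C xlt by (auto simp: algebra_simps)
  qed
  have p1: "0 < id1 * chi" "0 < id2 * chi" using chi e1(2) e2(2) by simp_all
  have c1: "chi / (1 + id2 * chi) \<le> chi / (1 + id1 * chi)"
    using chi p1 dlt by (intro divide_left_mono) (auto intro!: mult_right_mono)
  have c2: "chi / (1 + id1 * chi) > 0" using chi e1(2) by (simp add: add_pos_pos)
  have "chi / (1 + id2 * chi) * h x2 \<le> chi / (1 + id1 * chi) * h x2" using c1 h0 by (rule mult_right_mono)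
  also have "\<dots> < chi / (1 + id1 * chi) * h x1" using hlt c2 by (rule mult_strict_left_mono)
  finally show ?thesis unfolding agg x1_def x2_def .
qed

end
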